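(* Let $(P_X,P_{Y|X})$ be an input/channel pair satisfying (A3). Then there exist a contraction $\xi$ and a length function $\psi_\lambda$ (of the form below) such that for every $h\in\mathfrak F_c$, $$\mathbb E\Big(\psi_\lambda\big[F_{\Theta|\Phi}(\cdot\,|\,\Phi)\circ h\big]\Big)\le\xi\big(\psi_\lambda(h)\big),\qquad \Phi\sim\mathcal U.$$
   Context: $\mathcal U$ is uniform on $(0,1)$. Normalized channel of an input/channel pair $(P_X,P_{Y|X})$ (memoryless channel, input distribution in its input alphabet, $I(X;Y)<\infty$): $\Theta\sim\mathcal U$; given $\Theta=\theta$, $Y\sim P_{Y|X}(\cdot|F_X^{-1}(\theta))$ with $F_X^{-1}(t)=\inf\{x:F_X(x)>t\}$; $\Lambda\sim\mathcal U$ independent; $\Phi=F_Y(Y)-P_Y(\{Y\})\Lambda$; $F_{\Theta|\Phi}(\cdot|\phi)$ is the conditional c.d.f. of $\Theta$ given $\Phi=\phi$. (A3): for every $\theta\in(0,1)$, $\Pr(F_{\Theta|\Phi}(\theta|\Phi)=\theta)<1$. $\mathfrak F_c$ is the set of nondecreasing functions $h:(0,1)\to(0,1)$ whose range has convex hull $(0,1)$. For $\lambda:[0,1]\to[0,1]$ surjective, concave and symmetric about $\frac12$, the length function is $\psi_\lambda(h)=\int_0^1\lambda(h(x))dx$. A contraction is a nonnegative concave $\xi:[0,1]\to[0,1]$ with $\xi(x)<x$ for all $x\in(0,1]$. *)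

theory Defs
  imports "HOL-Probability.Probability"
begin

definition unif01 :: "real measure" where
  "unif01 = uniform_measure lborel {0<..<1}"

definition input_channel_pair :: "real measure \<Rightarrow> (real \<Rightarrow> real measure) \<Rightarrow> bool" where
  "input_channel_pair PX W \<longleftrightarrow> prob_space PX \<and> sets PX = sets borel \<and>
      W \<in> measurable borel (prob_algebra borel)"

text \<open>Joint law of (X,Y), output law, and finiteness of the mutual information
  I(X;Y) = D(P_XY || P_X x P_Y).\<close>
definition joint_XY :: "real measure \<Rightarrow> (real \<Rightarrow> real measure) \<Rightarrow> (real \<times> real) measure" where
  "joint_XY PX W = PX \<bind> (\<lambda>x. W x \<bind> (\<lambda>y. return (borel \<Otimes>\<^sub>M borel) (x, y)))"

definition output_law :: "real measure \<Rightarrow> (real \<Rightarrow> real measure) \<Rightarrow> real measure" where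
  "output_law PX W = PX \<bind> W"

definition finite_mutual_info :: "real measure \<Rightarrow> (real \<Rightarrow> real measure) \<Rightarrow> bool" where
  "finite_mutual_info PX W \<longleftrightarrow>
     (let J = joint_XY PX W; Q = PX \<Otimes>\<^sub>M output_law PX W in
        absolutely_continuous Q J \<and> integrable J (\<lambda>z. ln (enn2real (RN_deriv Q J z))))"

definition cdf_of :: "real measure \<Rightarrow> real \<Rightarrow> real" where
  "cdf_of P x = measure P {..x}"

definition gen_inv :: "(real \<Rightarrow> real) \<Rightarrow> real \<Rightarrow> real" where
  "gen_inv F t = Inf {x. F x > t}"

text \<open>Joint law of (Theta, Phi) of the normalized channel:
  Theta ~ U, Y ~ W(F_X^{-1}(Theta)), Lambda ~ U independent,
  Phi = F_Y(Y) - P_Y({Y}) Lambda.\<close>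
definition theta_phi_law :: "real measure \<Rightarrow> (real \<Rightarrow> real measure) \<Rightarrow> (real \<times> real) measure" where
  "theta_phi_law PX W =
     (let PY = output_law PX W; FX = cdf_of PX; FY = cdf_of PY in
      unif01 \<bind> (\<lambda>\<theta>. W (gen_inv FX \<theta>) \<bind> (\<lambda>y. unif01 \<bind> (\<lambda>l.
         return (borel \<Otimes>\<^sub>M borel) (\<theta>, FY y - measure PY {y} * l)))))"

definition phi_law :: "real measure \<Rightarrow> (real \<Rightarrow> real measure) \<Rightarrow> real measure" where
  "phi_law PX W = distr (theta_phi_law PX W) borel snd"

text \<open>K is a version of the conditional c.d.f. F_{Theta|Phi}(theta|phi) = K phi theta:
  for each phi a c.d.f. in theta, measurable in phi for each theta, and
  integrating to the joint law.\<close>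
definition is_cond_cdf :: "real measure \<Rightarrow> (real \<Rightarrow> real measure) \<Rightarrow> (real \<Rightarrow> real \<Rightarrow> real) \<Rightarrow> bool" where
  "is_cond_cdf PX W K \<longleftrightarrow>
     (\<forall>\<phi>. mono (K \<phi>) \<and> (\<forall>t. continuous (at_right t) (K \<phi>)) \<and>
           (K \<phi> \<longlongrightarrow> 0) at_bot \<and> (K \<phi> \<longlongrightarrow> 1) at_top) \<and>
     (\<forall>\<theta>. (\<lambda>\<phi>. K \<phi> \<theta>) \<in> borel_measurable borel) \<and>
     (\<forall>\<theta>. \<forall>B \<in> sets borel.
        measure (theta_phi_law PX W) {z. fst z \<le> \<theta> \<and> snd z \<in> B}
          = (\<integral>\<phi>\<in>B. K \<phi> \<theta> \<partial>phi_law PX W))"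

definition condA3 :: "real measure \<Rightarrow> (real \<Rightarrow> real measure) \<Rightarrow> (real \<Rightarrow> real \<Rightarrow> real) \<Rightarrow> bool" where
  "condA3 PX W K \<longleftrightarrow> (\<forall>\<theta>\<in>{0<..<1}. measure (phi_law PX W) {\<phi>. K \<phi> \<theta> = \<theta>} < 1)"

definition Fc :: "(real \<Rightarrow> real) set" where
  "Fc = {h. mono_on {0<..<1} h \<and> h ` {0<..<1} \<subseteq> {0<..<1} \<and>
            convex hull (h ` {0<..<1}) = {0<..<1}}"

definition admissible_lambda :: "(real \<Rightarrow> real) \<Rightarrow> bool" where
  "admissible_lambda lam \<longleftrightarrow> lam ` {0..1} = {0..1} \<and> concave_on {0..1} lam \<and>
      (\<forall>x\<in>{0..1}. lam (1 - x) = lam x)"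

definition psi :: "(real \<Rightarrow> real) \<Rightarrow> (real \<Rightarrow> real) \<Rightarrow> real" where
  "psi lam h = (\<integral>x\<in>{0<..<1}. lam (h x) \<partial>lborel)"

definition contraction :: "(real \<Rightarrow> real) \<Rightarrow> bool" where
  "contraction \<xi> \<longleftrightarrow> (\<forall>x\<in>{0..1}. 0 \<le> \<xi> x \<and> \<xi> x \<le> 1) \<and> concave_on {0..1} \<xi> \<and>
      (\<forall>x\<in>{0<..1}. \<xi> x < x)"

end

theory Submission
  imports Defs
begin


lemma gen_inv_meas:
  assumes "real_distribution P"
  shows "gen_inv (cdf_of P) \<in> borel_measurable borel"
proof -
  interpret real_distribution P by fact
  have cd: "cdf_of P = cdf P" by (auto simp: cdf_of_def cdf_def fun_eq_iff)
  have c1: "\<And>t. t < 0 \<Longrightarrow> {x. cdf P x > t} = UNIV" using cdf_nonneg by (auto intro: less_le_trans)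
  have c2: "\<And>t. t \<ge> 1 \<Longrightarrow> {x. cdf P x > t} = {}" using cdf_bounded_prob by (auto intro: le_less_trans) (meson cdf_bounded_prob le_less_trans not_le order_trans)
  show ?thesis
  proof (rule borel_measurable_piecewise_mono[of "{{..<0}, {0}, {0<..<1}, {1..}}"])
    show "\<Union>{{..<0}, {0}, {0<..<1}, {1..}} = (UNIV::real set)" by auto
    fix c assume c: "c \<in> {{..<0}, {0}, {0<..<1}, {(1::real)..}}"
    then show "c \<in> sets borel" by auto
    show "mono_on c (gen_inv (cdf_of P))"
      using c
    proof safe
      show "mono_on {..<0} (gen_inv (cdf_of P))"
        by (rule mono_onI) (simp add: gen_inv_def cd c1)
      show "mono_on {1..} (gen_inv (cdf_of P))"
        by (rule mono_onI) (simp add: gen_inv_def cd c2)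
      show "mono_on {0} (gen_inv (cdf_of P))"
        by (rule mono_onI) simp
      show "mono_on {0<..<1} (gen_inv (cdf_of P))"
      proof (rule mono_onI)
        fix r s :: real assume r: "r \<in> {0<..<1}" and s: "s \<in> {0<..<1}" and rs: "r \<le> s"
        have ne: "{x. cdf P x > s} \<noteq> {}"
        proof -
          from cdf_lim_at_top_prob s have "eventually (\<lambda>x. cdf P x > s) at_top"
            by (auto simp: order_tendsto_iff)
          then show ?thesis by (auto simp: eventually_at_top_linorder)
        qed
        have bd: "bdd_below {x. cdf P x > r}"
        proof -
          from cdf_lim_at_bot r have "eventually (\<lambda>x. cdf P x < r) at_bot"
            by (auto simp: order_tendsto_iff)
          then obtain b where b: "\<And>x. x \<le> b \<Longrightarrow> cdf P x < r" by (auto simp: eventually_at_bot_linorder)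
          show ?thesis
            by (rule bdd_belowI[of _ b]) (use b in \<open>fastforce intro: less_imp_le simp: not_less[symmetric]\<close>)
        qed
        have "{x. cdf P x > s} \<subseteq> {x. cdf P x > r}" using rs by auto
        then show "gen_inv (cdf_of P) r \<le> gen_inv (cdf_of P) s"
          unfolding gen_inv_def cd by (rule cInf_superset_mono[OF ne bd])
      qed
    qed
  qed simp
qed

lemma atom_meas:
  assumes "real_distribution P"
  shows "(\<lambda>y. measure P {y}) \<in> borel_measurable borel"
proof -
  interpret real_distribution P by fact
  have cm: "cdf P \<in> borel_measurable borel" by (intro borel_measurable_mono) (auto simp: mono_def cdf_nondecreasing)
  have eq: "measure P {y} = cdf P y - measure P {..<y}" for y
  proof -
    have "{..y} = {..<y} \<union> {y}" by auto
    then have "measure P {..y} = measure P {..<y} + measure P {y}"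
      using finite_measure_Union[of "{..<y}" "{y}"] by simp
    then show ?thesis by (simp add: cdf_def)
  qed
  have lim: "(\<lambda>n. cdf P (y - 1 / Suc n)) \<longlonglongrightarrow> measure P {..<y}" for y
  proof -
    have "((\<lambda>n. y - 1 / real (Suc n)) \<longlongrightarrow> y) sequentially"
      using tendsto_diff[OF tendsto_const LIMSEQ_inverse_real_of_nat, of y] by (simp add: inverse_eq_divide)
    then have "filterlim (\<lambda>n. y - 1 / real (Suc n)) (at_left y) sequentially"
      by (intro tendsto_imp_filterlim_at_left) auto
    from filterlim_compose[OF cdf_at_left this] show ?thesis by simp
  qed
  have "(\<lambda>y. measure P {..<y}) \<in> borel_measurable borel"
    by (rule borel_measurable_LIMSEQ_real[OF lim]) (use cm in measurable)
  then show ?thesis unfolding eq using cm by measurable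
qed

lemma unif01_space: "unif01 \<in> space (prob_algebra borel)"
  unfolding unif01_def space_prob_algebra
  by (auto intro!: prob_space_uniform_measure)

lemma partA:
  assumes "input_channel_pair PX W"
  shows "prob_space (phi_law PX W) \<and> sets (phi_law PX W) = sets borel \<and>
    (\<forall>\<theta>\<in>{0<..<1}. measure (theta_phi_law PX W) {z. fst z \<le> \<theta>} = \<theta>)"
proof -
  have PXs: "PX \<in> space (prob_algebra borel)" and Wm: "W \<in> borel \<rightarrow>\<^sub>M prob_algebra borel"
    using assms by (auto simp: input_channel_pair_def space_prob_algebra)
  define PY where "PY = output_law PX W"
  have PYs: "PY \<in> space (prob_algebra borel)"
    unfolding PY_def output_law_def space_prob_algebra
    using prob_space_bind'[OF PXs Wm] sets_bind'[OF PXs Wm] by auto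
  have rdY: "real_distribution PY" using PYs by (auto simp: space_prob_algebra real_distribution_def real_distribution_axioms_def)
  have rdX: "real_distribution PX" using PXs by (auto simp: space_prob_algebra real_distribution_def real_distribution_axioms_def)
  define FX where "FX = cdf_of PX"
  define FY where "FY = cdf_of PY"
  define atm where "atm = (\<lambda>y. measure PY {y})"
  have gm[measurable]: "gen_inv FX \<in> borel_measurable borel" unfolding FX_def by (rule gen_inv_meas[OF rdX])
  have atmm[measurable]: "atm \<in> borel_measurable borel" unfolding atm_def by (rule atom_meas[OF rdY])
  have FYm[measurable]: "FY \<in> borel_measurable borel"
  proof -
    interpret real_distribution PY by fact
    show ?thesis unfolding FY_def
      by (intro borel_measurable_mono) (auto simp: mono_def cdf_of_def intro!: finite_measure_mono)
  qed
  have Us: "unif01 \<in> space (prob_algebra borel)" by (rule unif01_space)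
  define R where "R = (\<lambda>(\<theta>::real) (y::real) (l::real). return (borel \<Otimes>\<^sub>M borel) (\<theta>, FY y - atm y * l))"
  define N2 where "N2 = (\<lambda>(\<theta>::real) (y::real). unif01 \<bind> R \<theta> y)"
  define N where "N = (\<lambda>(\<theta>::real). W (gen_inv FX \<theta>) \<bind> N2 \<theta>)"
  have Rm: "(\<lambda>(x, l). R (fst x) (snd x) l) \<in> (borel \<Otimes>\<^sub>M borel) \<Otimes>\<^sub>M borel \<rightarrow>\<^sub>M prob_algebra (borel \<Otimes>\<^sub>M borel)"
    unfolding R_def by measurable
  have N2m: "(\<lambda>(\<theta>, y). N2 \<theta> y) \<in> borel \<Otimes>\<^sub>M borel \<rightarrow>\<^sub>M prob_algebra (borel \<Otimes>\<^sub>M borel)"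
  proof -
    have "(\<lambda>x. unif01 \<bind> (\<lambda>l. R (fst x) (snd x) l)) \<in> borel \<Otimes>\<^sub>M borel \<rightarrow>\<^sub>M prob_algebra (borel \<Otimes>\<^sub>M borel)"
      by (rule measurable_bind_prob_space2[OF measurable_const[OF Us] Rm])
    then show ?thesis unfolding N2_def by (simp add: case_prod_beta')
  qed
  have Wg: "(\<lambda>\<theta>. W (gen_inv FX \<theta>)) \<in> borel \<rightarrow>\<^sub>M prob_algebra borel"
    by (rule measurable_compose[OF gm Wm])
  have Nm: "N \<in> borel \<rightarrow>\<^sub>M prob_algebra (borel \<Otimes>\<^sub>M borel)"
    unfolding N_def by (rule measurable_bind_prob_space2[OF Wg N2m])
  have T: "theta_phi_law PX W = unif01 \<bind> N"
    by (simp add: theta_phi_law_def Let_def N_def N2_def R_def FX_def FY_def atm_def PY_def)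
  have Tp: "prob_space (theta_phi_law PX W)" unfolding T by (rule prob_space_bind'[OF Us Nm])
  have Ts: "sets (theta_phi_law PX W) = sets (borel \<Otimes>\<^sub>M borel)" unfolding T by (rule sets_bind'[OF Us Nm])
  have P1: "prob_space (phi_law PX W)" unfolding phi_law_def
    by (rule prob_space.prob_space_distr[OF Tp]) (simp add: measurable_cong_sets[OF Ts refl])
  have P2: "sets (phi_law PX W) = sets borel" unfolding phi_law_def by simp
  have P3: "measure (theta_phi_law PX W) {z. fst z \<le> \<theta>} = \<theta>" if th: "\<theta> \<in> {0<..<1}" for \<theta>
  proof -
    define X where "X = {z::real\<times>real. fst z \<le> \<theta>}"
    have "{z \<in> space (borel \<Otimes>\<^sub>M borel). fst z \<le> \<theta>} \<in> sets (borel \<Otimes>\<^sub>M borel)" by measurable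
    then have Xs: "X \<in> sets (borel \<Otimes>\<^sub>M borel)" unfolding X_def by (simp add: space_pair_measure)
    have eN: "emeasure (N t) X = indicator {..\<theta>} t" for t
    proof -
      have Wt: "W (gen_inv FX t) \<in> space (prob_algebra borel)" using Wg by (auto dest: measurable_space)
      have N2t: "N2 t \<in> borel \<rightarrow>\<^sub>M prob_algebra (borel \<Otimes>\<^sub>M borel)"
        using measurable_Pair2[OF N2m, of t] by simp
      have Rt: "R t y \<in> borel \<rightarrow>\<^sub>M prob_algebra (borel \<Otimes>\<^sub>M borel)" for y
        unfolding R_def by measurable
      have e2: "emeasure (N2 t y) X = indicator {..\<theta>} t" for y
      proof -
        have "emeasure (N2 t y) X = (\<integral>\<^sup>+l. emeasure (R t y l) X \<partial>unif01)"
          unfolding N2_def by (rule emeasure_bind_prob_algebra[OF Us Rt Xs])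
        also have "\<dots> = (\<integral>\<^sup>+l. indicator {..\<theta>} t \<partial>unif01)"
          using Xs by (intro nn_integral_cong) (simp add: R_def X_def split: split_indicator)
        also have "\<dots> = indicator {..\<theta>} t"
          using Us by (simp add: space_prob_algebra prob_space.emeasure_space_1)
        finally show ?thesis .
      qed
      have "emeasure (N t) X = (\<integral>\<^sup>+y. emeasure (N2 t y) X \<partial>W (gen_inv FX t))"
        unfolding N_def by (rule emeasure_bind_prob_algebra[OF Wt N2t Xs])
      also have "\<dots> = indicator {..\<theta>} t" using Wt
        by (simp add: e2 space_prob_algebra prob_space.emeasure_space_1)
      finally show ?thesis .
    qed
    have "emeasure (theta_phi_law PX W) X = (\<integral>\<^sup>+t. emeasure (N t) X \<partial>unif01)"
      unfolding T by (rule emeasure_bind_prob_algebra[OF Us Nm Xs])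
    also have "\<dots> = emeasure unif01 {..\<theta>}"
      using Us by (simp add: eN space_prob_algebra)
    also have "\<dots> = ennreal \<theta>"
    proof -
      have "{0<..<1} \<inter> {..\<theta>} = {0<..\<theta>}" using th by auto
      then show ?thesis using th by (simp add: unif01_def divide_ennreal_def)
    qed
    finally show ?thesis using th unfolding X_def by (simp add: measure_def)
  qed
  show ?thesis using P1 P2 P3 by blast
qed



definition lam4 :: "real \<Rightarrow> real" where "lam4 y = 4 * y * (1 - y)"

lemma lam4_bounds: "0 \<le> y \<Longrightarrow> y \<le> 1 \<Longrightarrow> 0 \<le> lam4 y \<and> lam4 y \<le> 1"
proof -
  assume "0 \<le> y" "y \<le> 1"
  have "0 \<le> (2*y - 1)^2" by simp
  moreover have "0 \<le> y*(1-y)" using \<open>0 \<le> y\<close> \<open>y \<le> 1\<close> by simp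
  ultimately show ?thesis by (auto simp: lam4_def power2_eq_square algebra_simps)
qed

lemma lam4_adm: "admissible_lambda lam4"
proof -
  have img: "lam4 ` {0..1} = {0..1}"
  proof
    show "lam4 ` {0..1} \<subseteq> {0..1}" using lam4_bounds by auto
    show "{0..1} \<subseteq> lam4 ` {0..1}"
    proof
      fix c :: real assume c: "c \<in> {0..1}"
      define y where "y = (1 - sqrt (1 - c)) / 2"
      have s: "0 \<le> sqrt (1 - c)" "sqrt (1 - c) \<le> 1" "(sqrt (1 - c))^2 = 1 - c" using c by auto
      have gen: "lam4 ((1 - r)/2) = 1 - r^2" for r by (simp add: lam4_def power2_eq_square field_simps)
      have "lam4 y = 1 - (sqrt (1 - c))^2" unfolding y_def by (rule gen)
      then have lc: "lam4 y = c" using s by simp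
      have hb: "0 \<le> r \<Longrightarrow> r \<le> 1 \<Longrightarrow> 0 \<le> (1 - r) / 2 \<and> (1 - r) / 2 \<le> (1::real)" for r by auto
      have "y \<in> {0..1}" using hb[OF s(1) s(2)] unfolding y_def by simp
      then show "c \<in> lam4 ` {0..1}" using lc by force
    qed
  qed
  have conc: "concave_on {0..1} lam4"
    unfolding concave_on_def
    by (rule convex_on_realI[where f'="\<lambda>x. 8*x - 4"])
       (auto simp: lam4_def intro!: derivative_eq_intros simp: algebra_simps)
  show ?thesis unfolding admissible_lambda_def using img conc by (auto simp: lam4_def algebra_simps)
qed

locale ccdf = prob_space M for M :: "real measure" +
  fixes K :: "real \<Rightarrow> real \<Rightarrow> real"
  assumes sM: "sets M = sets borel"
  and Kmono: "\<And>\<phi>. mono (K \<phi>)"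
  and Kr: "\<And>\<phi> t. continuous (at_right t) (K \<phi>)"
  and K0: "\<And>\<phi> t. 0 \<le> K \<phi> t" and K1: "\<And>\<phi> t. K \<phi> t \<le> 1"
  and Km[measurable]: "\<And>\<theta>. (\<lambda>\<phi>. K \<phi> \<theta>) \<in> borel_measurable M"
  and Kmean: "\<And>\<theta>. \<theta>\<in>{0<..<1} \<Longrightarrow> expectation (\<lambda>\<phi>. K \<phi> \<theta>) = \<theta>"
  and A3: "\<And>\<theta>. \<theta>\<in>{0<..<1} \<Longrightarrow> prob {\<phi>. K \<phi> \<theta> = \<theta>} < 1"
begin

definition D :: "real \<Rightarrow> real" where "D \<theta> = expectation (\<lambda>\<phi>. \<bar>K \<phi> \<theta> - \<theta>\<bar>)"

lemma intK: fixes B :: real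
  assumes "f \<in> borel_measurable borel" "\<And>y. 0 \<le> y \<Longrightarrow> y \<le> 1 \<Longrightarrow> \<bar>f y\<bar> \<le> B"
  shows "integrable M (\<lambda>\<phi>. f (K \<phi> \<theta>))"
  by (rule integrable_const_bound[where B=B]) (use assms K0 K1 in auto)

lemma spaceM: "space M = UNIV" using sets_eq_imp_space_eq[OF sM] by simp

lemma gap:
  assumes th: "\<theta> \<in> {0<..<1}"
  shows "expectation (\<lambda>\<phi>. lam4 (K \<phi> \<theta>)) \<le> lam4 \<theta> - 4 * (D \<theta>)^2"
proof -
  define d where "d = D \<theta>"
  let ?X = "\<lambda>\<phi>. \<bar>K \<phi> \<theta> - \<theta>\<bar>"
  have iK: "integrable M (\<lambda>\<phi>. K \<phi> \<theta>)" by (rule intK[where B=1, of "\<lambda>y. y"]) auto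
  have iX: "integrable M ?X" by (rule intK[where B=2, of "\<lambda>y. \<bar>y - \<theta>\<bar>"]) (use th in auto)
  have iL: "integrable M (\<lambda>\<phi>. lam4 (K \<phi> \<theta>))" by (rule intK[where B=1]) (auto simp: lam4_def dest: lam4_bounds)
  have sq: "\<bar>a\<bar> \<le> b \<Longrightarrow> \<bar>a^2\<bar> \<le> b^2" for a b :: real
    using power_mono[of "\<bar>a\<bar>" b 2] by simp
  have iQ: "integrable M (\<lambda>\<phi>. (?X \<phi> - d)^2)"
  proof (rule intK[where B="(2 + \<bar>d\<bar>)^2", of "\<lambda>y. (\<bar>y - \<theta>\<bar> - d)^2"])
    fix y :: real assume "0 \<le> y" "y \<le> 1"
    then have "\<bar>\<bar>y - \<theta>\<bar> - d\<bar> \<le> 2 + \<bar>d\<bar>" using th by auto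
    then show "\<bar>(\<bar>y - \<theta>\<bar> - d)^2\<bar> \<le> (2 + \<bar>d\<bar>)^2" by (rule sq)
  qed simp
  have pt: "lam4 (K \<phi> \<theta>) + 4 * (?X \<phi> - d)^2 = (lam4 \<theta> + 4*d^2) + 4*(1 - 2*\<theta>) * (K \<phi> \<theta>) - 4*(1-2*\<theta>)*\<theta> - 8 * d * ?X \<phi>" for \<phi>
    by (simp add: lam4_def power2_eq_square algebra_simps abs_mult_self_eq)
  have "expectation (\<lambda>\<phi>. lam4 (K \<phi> \<theta>)) + 4 * expectation (\<lambda>\<phi>. (?X \<phi> - d)^2)
        = expectation (\<lambda>\<phi>. lam4 (K \<phi> \<theta>) + 4 * (?X \<phi> - d)^2)"
    using iL iQ by simp
  also have "\<dots> = expectation (\<lambda>\<phi>. (lam4 \<theta> + 4*d^2) + 4*(1 - 2*\<theta>) * (K \<phi> \<theta>) - 4*(1-2*\<theta>)*\<theta> - 8 * d * ?X \<phi>)"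
    by (simp only: pt)
  also have "\<dots> = (lam4 \<theta> + 4*d^2) + 4*(1 - 2*\<theta>) * expectation (\<lambda>\<phi>. K \<phi> \<theta>) - 4*(1-2*\<theta>)*\<theta> - 8 * d * expectation ?X"
    using iK iX by (simp add: prob_space)
  also have "\<dots> = lam4 \<theta> - 4 * d^2"
    using Kmean[OF th] by (simp add: d_def D_def power2_eq_square)
  finally have "expectation (\<lambda>\<phi>. lam4 (K \<phi> \<theta>)) = lam4 \<theta> - 4 * d^2 - 4 * expectation (\<lambda>\<phi>. (?X \<phi> - d)^2)" by simp
  moreover have "0 \<le> expectation (\<lambda>\<phi>. (?X \<phi> - d)^2)" by simp
  ultimately show ?thesis by (simp add: d_def)
qed


lemma D_pos:
  assumes th: "\<theta> \<in> {0<..<1}"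
  shows "0 < D \<theta>"
proof -
  have iX: "integrable M (\<lambda>\<phi>. \<bar>K \<phi> \<theta> - \<theta>\<bar>)" by (rule intK[where B=2, of "\<lambda>y. \<bar>y - \<theta>\<bar>"]) (use th in auto)
  have "D \<theta> \<ge> 0" unfolding D_def by simp
  moreover have "D \<theta> \<noteq> 0"
  proof
    assume "D \<theta> = 0"
    then have "AE \<phi> in M. \<bar>K \<phi> \<theta> - \<theta>\<bar> = 0"
      using integral_nonneg_eq_0_iff_AE[OF iX] unfolding D_def by simp
    then have "AE \<phi> in M. \<phi> \<in> {\<phi>. K \<phi> \<theta> = \<theta>}" by simp
    moreover have ev: "{\<phi>. K \<phi> \<theta> = \<theta>} \<in> sets M"
    proof -
      have "{\<phi> \<in> space M. K \<phi> \<theta> = \<theta>} \<in> sets M" by measurable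
      then show ?thesis by (simp add: spaceM)
    qed
    ultimately have "prob {\<phi>. K \<phi> \<theta> = \<theta>} = 1" using prob_eq_1[OF ev] by simp
    with A3[OF th] show False by simp
  qed
  ultimately show ?thesis by simp
qed

lemma D_half:
  assumes th: "\<theta> \<in> {0<..<1}"
  shows "D \<theta> = 2 * expectation (\<lambda>\<phi>. max (K \<phi> \<theta> - \<theta>) 0)"
    and "D \<theta> = 2 * expectation (\<lambda>\<phi>. max (\<theta> - K \<phi> \<theta>) 0)"
proof -
  have iK: "integrable M (\<lambda>\<phi>. K \<phi> \<theta>)" by (rule intK[where B=1, of "\<lambda>y. y"]) auto
  have iP: "integrable M (\<lambda>\<phi>. max (K \<phi> \<theta> - \<theta>) 0)" by (rule intK[where B=2, of "\<lambda>y. max (y - \<theta>) 0"]) (use th in auto)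
  have iN: "integrable M (\<lambda>\<phi>. max (\<theta> - K \<phi> \<theta>) 0)" by (rule intK[where B=2, of "\<lambda>y. max (\<theta> - y) 0"]) (use th in auto)
  have p1: "\<bar>K \<phi> \<theta> - \<theta>\<bar> = 2 * max (K \<phi> \<theta> - \<theta>) 0 - (K \<phi> \<theta> - \<theta>)" for \<phi> by (auto split: abs_split split_max)
  have p2: "\<bar>K \<phi> \<theta> - \<theta>\<bar> = 2 * max (\<theta> - K \<phi> \<theta>) 0 + (K \<phi> \<theta> - \<theta>)" for \<phi> by (auto split: abs_split split_max)
  show "D \<theta> = 2 * expectation (\<lambda>\<phi>. max (K \<phi> \<theta> - \<theta>) 0)"
    unfolding D_def p1 using iK iP Kmean[OF th] by (simp add: prob_space)
  show "D \<theta> = 2 * expectation (\<lambda>\<phi>. max (\<theta> - K \<phi> \<theta>) 0)"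
    unfolding D_def p2 using iK iN Kmean[OF th] by (simp add: prob_space)
qed

lemma D_lip:
  assumes a: "a \<in> {0<..<1}" and b: "b \<in> {0<..<1}" and ab: "a \<le> b"
  shows "\<bar>D b - D a\<bar> \<le> 2 * (b - a)"
proof -
  have i1: "integrable M (\<lambda>\<phi>. max (K \<phi> t - u) 0)" for t u
    by (rule intK[where B="1 + \<bar>u\<bar>", of "\<lambda>y. max (y - u) 0"]) auto
  have i2: "integrable M (\<lambda>\<phi>. max (u - K \<phi> t) 0)" for t u
    by (rule intK[where B="1 + \<bar>u\<bar>", of "\<lambda>y. max (u - y) 0"]) auto
  have "expectation (\<lambda>\<phi>. max (K \<phi> a - a) 0) - (b - a) = expectation (\<lambda>\<phi>. max (K \<phi> a - a) 0 - (b - a))"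
    using i1 by (simp add: prob_space)
  also have "\<dots> \<le> expectation (\<lambda>\<phi>. max (K \<phi> b - b) 0)"
  proof (rule integral_mono)
    show "integrable M (\<lambda>\<phi>. max (K \<phi> a - a) 0 - (b - a))" using i1 by simp
    show "integrable M (\<lambda>\<phi>. max (K \<phi> b - b) 0)" by (rule i1)
    fix \<phi> have "K \<phi> a \<le> K \<phi> b" using Kmono ab by (simp add: mono_def)
    then show "max (K \<phi> a - a) 0 - (b - a) \<le> max (K \<phi> b - b) 0" using ab by (auto split: split_max)
  qed
  finally have l1: "D a - 2 * (b - a) \<le> D b" using D_half(1)[OF a] D_half(1)[OF b] by simp
  have "expectation (\<lambda>\<phi>. max (b - K \<phi> b) 0) - (b - a) = expectation (\<lambda>\<phi>. max (b - K \<phi> b) 0 - (b - a))"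
    using i2 by (simp add: prob_space)
  also have "\<dots> \<le> expectation (\<lambda>\<phi>. max (a - K \<phi> a) 0)"
  proof (rule integral_mono)
    show "integrable M (\<lambda>\<phi>. max (b - K \<phi> b) 0 - (b - a))" using i2 by simp
    show "integrable M (\<lambda>\<phi>. max (a - K \<phi> a) 0)" by (rule i2)
    fix \<phi> have "K \<phi> a \<le> K \<phi> b" using Kmono ab by (simp add: mono_def)
    then show "max (b - K \<phi> b) 0 - (b - a) \<le> max (a - K \<phi> a) 0" using ab by (auto split: split_max)
  qed
  finally have l2: "D b - 2 * (b - a) \<le> D a" using D_half(2)[OF a] D_half(2)[OF b] by simp
  show ?thesis using l1 l2 by auto
qed

lemma D_cont: "continuous_on {0<..<1} D"
  unfolding continuous_on_iff
proof (intro ballI allI impI)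
  fix x e :: real assume x: "x \<in> {0<..<1}" and e: "0 < e"
  show "\<exists>d>0. \<forall>x'\<in>{0<..<1}. dist x' x < d \<longrightarrow> dist (D x') (D x) < e"
  proof (intro exI[of _ "e/2"] conjI ballI impI)
    show "0 < e/2" using e by simp
    fix y assume y: "y \<in> {0<..<1}" and d: "dist y x < e/2"
    have "\<bar>D y - D x\<bar> \<le> 2 * \<bar>y - x\<bar>"
    proof (cases "x \<le> y")
      case True then show ?thesis using D_lip[OF x y] by simp
    next
      case False then show ?thesis using D_lip[OF y x] by (simp add: abs_minus_commute)
    qed
    then show "dist (D y) (D x) < e" using d by (simp add: dist_real_def)
  qed
qed

lemma c_exists:
  assumes s: "0 < s"
  shows "\<exists>c>0. c \<le> 1/4 \<and> (\<forall>\<theta>\<in>{0<..<1}. s \<le> lam4 \<theta> \<longrightarrow> c \<le> (D \<theta>)^2)"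
proof (cases "s \<le> 1")
  case False
  have "lam4 \<theta> < s" if "\<theta>\<in>{0<..<1}" for \<theta> using lam4_bounds[of \<theta>] that False by auto
  then show ?thesis by (intro exI[of _ "1/4"]) force
next
  case True
  define S where "S = {0..1} \<inter> {\<theta>::real. s \<le> lam4 \<theta>}"
  have cl: "closed {\<theta>::real. s \<le> lam4 \<theta>}"
    unfolding lam4_def by (intro closed_Collect_le continuous_intros)
  have cS: "compact S" unfolding S_def by (intro compact_Int_closed compact_Icc cl)
  have sub: "S \<subseteq> {0<..<1}"
  proof
    fix \<theta> assume "\<theta> \<in> S"
    then have "0 \<le> \<theta>" "\<theta> \<le> 1" "s \<le> lam4 \<theta>" by (auto simp: S_def)
    then show "\<theta> \<in> {0<..<1}" using s by (cases "\<theta> = 0"; cases "\<theta> = 1") (auto simp: lam4_def)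
  qed
  have "1/2 \<in> S" using True unfolding S_def by (auto simp: lam4_def)
  then have ne: "S \<noteq> {}" by blast
  have co: "continuous_on S (\<lambda>\<theta>. (D \<theta>)^2)"
    by (intro continuous_intros continuous_on_subset[OF D_cont sub])
  obtain m where m: "m \<in> S" "\<And>y. y \<in> S \<Longrightarrow> (D m)^2 \<le> (D y)^2"
    using continuous_attains_inf[OF cS ne co] by blast
  have "0 < D m" using D_pos sub m(1) by auto
  then show ?thesis using m sub
    by (intro exI[of _ "min (1/4) ((D m)^2)"]) (auto simp: S_def min.coboundedI2)
qed


definition cc :: "real \<Rightarrow> real" where
  "cc s = (SOME c. c>0 \<and> c \<le> 1/4 \<and> (\<forall>\<theta>\<in>{0<..<1}. s \<le> lam4 \<theta> \<longrightarrow> c \<le> (D \<theta>)^2))"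

lemma cc: assumes "0 < s" shows "0 < cc s" "cc s \<le> 1/4" "\<And>\<theta>. \<theta>\<in>{0<..<1} \<Longrightarrow> s \<le> lam4 \<theta> \<Longrightarrow> cc s \<le> (D \<theta>)^2"
  using someI_ex[OF c_exists[OF assms]] unfolding cc_def[symmetric] by auto

definition gg :: "real \<Rightarrow> real" where "gg t = (SUP s\<in>{0<..1}. cc s * max 0 (t - s))"

definition xi :: "real \<Rightarrow> real" where "xi t = t - 4 * gg t"

lemma gg_bdd: "bdd_above ((\<lambda>s. cc s * max 0 (t - s)) ` {0<..1})"
proof (rule bdd_aboveI2[where M="1/4 * max 0 t"])
  fix s :: real assume s: "s \<in> {0<..1}"
  have "cc s * max 0 (t - s) \<le> 1/4 * max 0 (t - s)" using cc[of s] s by (intro mult_right_mono) auto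
  also have "\<dots> \<le> 1/4 * max 0 t" using s by auto
  finally show "cc s * max 0 (t - s) \<le> 1/4 * max 0 t" .
qed

lemma gg_ge: "s \<in> {0<..1} \<Longrightarrow> cc s * max 0 (t - s) \<le> gg t"
  unfolding gg_def by (rule cSUP_upper[OF _ gg_bdd])

lemma gg_le: "(\<And>s. s \<in> {0<..1} \<Longrightarrow> cc s * max 0 (t - s) \<le> B) \<Longrightarrow> gg t \<le> B"
  unfolding gg_def by (rule cSUP_least) auto

lemma xi_contraction: "contraction xi"
proof -
  have g0: "0 \<le> gg t" for t using gg_ge[of 1 t] cc[of 1] by (auto intro: order_trans[rotated])
  have g1: "gg t \<le> t/4" if "0 \<le> t" for t
  proof (rule gg_le)
    fix s :: real assume s: "s \<in> {0<..1}"
    have "cc s * max 0 (t - s) \<le> 1/4 * max 0 (t - s)" using cc[of s] s by (intro mult_right_mono) auto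
    also have "\<dots> \<le> t/4" using s that by auto
    finally show "cc s * max 0 (t - s) \<le> t/4" .
  qed
  have g2: "0 < gg t" if "0 < t" "t \<le> 1" for t
  proof -
    have "0 < cc (t/2) * max 0 (t - t/2)" using cc[of "t/2"] that by auto
    also have "\<dots> \<le> gg t" using that by (intro gg_ge) auto
    finally show ?thesis .
  qed
  have conv: "convex_on {0..1} gg"
    unfolding convex_on_def
  proof (intro conjI ballI allI impI)
    show "convex {0..1::real}" by simp
    fix x y u v :: real assume x: "x \<in> {0..1}" and y: "y \<in> {0..1}" and u: "0 \<le> u" and v: "0 \<le> v" and uv: "u + v = 1"
    show "gg (u *\<^sub>R x + v *\<^sub>R y) \<le> u * gg x + v * gg y"
    proof (rule gg_le)
      fix s :: real assume s: "s \<in> {0<..1}"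
      have m: "max 0 (u * x + v * y - s) \<le> u * max 0 (x - s) + v * max 0 (y - s)"
      proof -
        have "u * x + v * y - s = u * (x - s) + v * (y - s)" using uv by (simp add: algebra_simps flip: distrib_left)
        moreover have "u * (x - s) \<le> u * max 0 (x - s)" using u by (intro mult_left_mono) auto
        moreover have "v * (y - s) \<le> v * max 0 (y - s)" using v by (intro mult_left_mono) auto
        moreover have "0 \<le> u * max 0 (x - s) + v * max 0 (y - s)" using u v by simp
        ultimately show ?thesis by simp
      qed
      have "cc s * max 0 (u *\<^sub>R x + v *\<^sub>R y - s) \<le> cc s * (u * max 0 (x - s) + v * max 0 (y - s))"
        using m cc[of s] s by (intro mult_left_mono) auto
      also have "\<dots> = u * (cc s * max 0 (x - s)) + v * (cc s * max 0 (y - s))" by (simp add: algebra_simps)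
      also have "\<dots> \<le> u * gg x + v * gg y"
        using u v s by (intro add_mono mult_left_mono gg_ge) auto
      finally show "cc s * max 0 (u *\<^sub>R x + v *\<^sub>R y - s) \<le> u * gg x + v * gg y" .
    qed
  qed
  have "concave_on {0..1} xi"
    unfolding concave_on_def convex_on_def
  proof (intro conjI ballI allI impI)
    show "convex {0..1::real}" by simp
    fix x y u v :: real assume x: "x \<in> {0..1}" and y: "y \<in> {0..1}" and u: "0 \<le> u" and v: "0 \<le> v" and uv: "u + v = 1"
    have "gg (u *\<^sub>R x + v *\<^sub>R y) \<le> u * gg x + v * gg y" using conv x y u v uv unfolding convex_on_def by blast
    then show "- xi (u *\<^sub>R x + v *\<^sub>R y) \<le> u * - xi x + v * - xi y"
      using uv unfolding xi_def by (simp add: algebra_simps)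
  qed
  then show ?thesis unfolding contraction_def xi_def using g0 g1 g2
    by (auto, smt (verit) g0 g1, smt (verit) g0 g1)
qed


lemma Kj: "(\<lambda>(\<theta>, \<phi>). K \<phi> \<theta>) \<in> borel_measurable (borel \<Otimes>\<^sub>M M)"
proof -
  define u where "u n = (\<lambda>(\<theta>::real, \<phi>::real). K \<phi> (real_of_int \<lceil>real (Suc n) * \<theta>\<rceil> / real (Suc n)))" for n
  have um: "u n \<in> borel_measurable (borel \<Otimes>\<^sub>M M)" for n
  proof -
    have "(\<lambda>x. (\<lambda>i::int. \<lambda>z::real\<times>real. K (snd z) (real_of_int i / real (Suc n))) ((\<lambda>z. \<lceil>real (Suc n) * fst z\<rceil>) x) x) \<in> borel_measurable (borel \<Otimes>\<^sub>M M)"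
    proof (rule measurable_compose_countable'[where I=UNIV and f="\<lambda>i::int. \<lambda>z::real\<times>real. K (snd z) (real_of_int i / real (Suc n))" and g="\<lambda>z. \<lceil>real (Suc n) * fst z\<rceil>"])
      fix i :: int
      show "(\<lambda>x. K (snd x) (real_of_int i / real (Suc n))) \<in> borel_measurable (borel \<Otimes>\<^sub>M M)"
        by (rule measurable_compose[OF measurable_snd Km])
    qed measurable
    then show ?thesis unfolding u_def by (simp add: case_prod_beta')
  qed
  have lim: "(\<lambda>n. u n z) \<longlonglongrightarrow> (case z of (\<theta>, \<phi>) \<Rightarrow> K \<phi> \<theta>)" for z
  proof -
    obtain \<theta> \<phi> where z: "z = (\<theta>, \<phi>)" by (cases z)
    have r: "((\<lambda>n. \<theta> + 1 / real (Suc n)) \<longlongrightarrow> \<theta>) sequentially"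
      using tendsto_add[OF tendsto_const LIMSEQ_inverse_real_of_nat, of \<theta>] by (simp add: inverse_eq_divide)
    have "filterlim (\<lambda>n. \<theta> + 1 / real (Suc n)) (at_right \<theta>) sequentially"
      by (rule tendsto_imp_filterlim_at_right[OF r]) simp
    moreover have "(K \<phi> \<longlongrightarrow> K \<phi> \<theta>) (at_right \<theta>)" using Kr[where \<phi>=\<phi> and t=\<theta>] by (simp add: continuous_within)
    ultimately have up: "(\<lambda>n. K \<phi> (\<theta> + 1 / real (Suc n))) \<longlonglongrightarrow> K \<phi> \<theta>"
      by (rule filterlim_compose[rotated])
    have bnd: "\<theta> \<le> real_of_int \<lceil>real (Suc n) * \<theta>\<rceil> / real (Suc n) \<and> real_of_int \<lceil>real (Suc n) * \<theta>\<rceil> / real (Suc n) \<le> \<theta> + 1 / real (Suc n)" for n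
    proof -
      have "real (Suc n) * \<theta> \<le> real_of_int \<lceil>real (Suc n) * \<theta>\<rceil>" "real_of_int \<lceil>real (Suc n) * \<theta>\<rceil> \<le> real (Suc n) * \<theta> + 1"
        by linarith+
      moreover have N: "0 < real (Suc n)" by simp
      moreover have "(\<theta> + 1 / real (Suc n)) * real (Suc n) = real (Suc n) * \<theta> + 1" using N by (simp add: field_simps)
      ultimately show ?thesis by (simp add: pos_divide_le_eq pos_le_divide_eq mult.commute)
    qed
    have "(\<lambda>n. u n (\<theta>, \<phi>)) \<longlonglongrightarrow> K \<phi> \<theta>"
    proof (rule tendsto_sandwich[OF _ _ tendsto_const up])
      show "eventually (\<lambda>n. K \<phi> \<theta> \<le> u n (\<theta>, \<phi>)) sequentially"
        using bnd Kmono by (auto simp: u_def mono_def)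
      show "eventually (\<lambda>n. u n (\<theta>, \<phi>) \<le> K \<phi> (\<theta> + 1 / real (Suc n))) sequentially"
        using bnd Kmono by (auto simp: u_def mono_def)
    qed
    then show ?thesis using z by simp
  qed
  show ?thesis by (rule borel_measurable_LIMSEQ_real[OF lim um])
qed


lemma D_meas: "D \<in> borel_measurable borel"
proof -
  have "(\<lambda>(\<theta>, \<phi>). \<bar>K \<phi> \<theta> - \<theta>\<bar>) \<in> borel_measurable (borel \<Otimes>\<^sub>M M)"
    using Kj by (simp add: case_prod_beta') measurable
  then have "(\<lambda>\<theta>. \<integral>\<phi>. \<bar>K \<phi> \<theta> - \<theta>\<bar> \<partial>M) \<in> borel_measurable borel"
    using borel_measurable_lebesgue_integral[where f="\<lambda>\<theta> \<phi>. \<bar>K \<phi> \<theta> - \<theta>\<bar>" and N=borel] by simp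
  then show ?thesis unfolding D_def .
qed

lemma intA:
  fixes f :: "real \<Rightarrow> real" and B :: real
  assumes "f \<in> borel_measurable borel" "\<And>x. x \<in> {0<..<1} \<Longrightarrow> \<bar>f x\<bar> \<le> B"
  shows "integrable lborel (\<lambda>x. indicator {0<..<1::real} x * f x)"
  using integrableI_bounded_set_indicator[of "{0<..<1::real}" lborel f B] assms by simp

lemma main:
  assumes h: "h \<in> Fc"
  shows "(\<integral>\<phi>. psi lam4 (K \<phi> \<circ> h) \<partial>M) \<le> xi (psi lam4 h)"
proof -
  define A where "A = {0<..<1::real}"
  have As: "A \<in> sets borel" unfolding A_def by simp
  have hm: "mono_on A h" and hA: "\<And>x. x \<in> A \<Longrightarrow> h x \<in> A" using h unfolding Fc_def A_def by (auto simp: image_subset_iff)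
  define hb where "hb x = (if x \<in> A then h x else 1/2)" for x
  have hbA: "hb x \<in> A" for x using hA by (auto simp: hb_def A_def)
  have hbm[measurable]: "hb \<in> borel_measurable borel"
    using borel_measurable_mono_on_fnc[OF hm] measurable_restrict_space_iff[where \<Omega>=A and M=borel and N="borel::real measure" and c="1/2" and f=h] As
    unfolding hb_def by simp
  define F where "F x \<phi> = indicator A x * lam4 (K \<phi> (hb x))" for x \<phi>
  have Fm: "(\<lambda>(x, \<phi>). F x \<phi>) \<in> borel_measurable (lborel \<Otimes>\<^sub>M M)"
  proof -
    have "(\<lambda>z. (hb (fst z), snd z)) \<in> (lborel \<Otimes>\<^sub>M M) \<rightarrow>\<^sub>M (borel \<Otimes>\<^sub>M M)" by measurable
    from measurable_compose[OF this Kj]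
    have "(\<lambda>z. K (snd z) (hb (fst z))) \<in> borel_measurable (lborel \<Otimes>\<^sub>M M)" by simp
    then show ?thesis unfolding F_def lam4_def using As by (simp add: case_prod_beta') measurable
  qed
  interpret P: pair_sigma_finite lborel M
    by (intro pair_sigma_finite.intro lborel.sigma_finite_measure_axioms sigma_finite_measure_axioms)
  have Fint: "integrable (lborel \<Otimes>\<^sub>M M) (\<lambda>(x, \<phi>). F x \<phi>)"
  proof (rule integrableI_bounded_set[where A="A \<times> space M" and B=1])
    show "A \<times> space M \<in> sets (lborel \<Otimes>\<^sub>M M)" using As by simp
    show "emeasure (lborel \<Otimes>\<^sub>M M) (A \<times> space M) < \<infinity>"
      using As emeasure_pair_measure_Times[of A lborel "space M"] by (simp add: emeasure_space_1 A_def)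
    show "AE x in lborel \<Otimes>\<^sub>M M. x \<in> A \<times> space M \<longrightarrow> norm (case x of (x, \<phi>) \<Rightarrow> F x \<phi>) \<le> 1"
      using lam4_bounds K0 K1 by (auto simp: F_def)
    show "AE x in lborel \<Otimes>\<^sub>M M. x \<notin> A \<times> space M \<longrightarrow> (case x of (x, \<phi>) \<Rightarrow> F x \<phi>) = 0"
      by (intro AE_I2) (auto simp: F_def spaceM indicator_def)
  qed (rule Fm)
  have psiK: "psi lam4 (K \<phi> \<circ> h) = (\<integral>x. F x \<phi> \<partial>lborel)" for \<phi>
    unfolding psi_def set_lebesgue_integral_def F_def A_def[symmetric]
    by (intro Bochner_Integration.integral_cong) (auto simp: hb_def split: split_indicator)
  define t where "t = psi lam4 h"
  have tdef: "t = (\<integral>x. indicator A x * lam4 (hb x) \<partial>lborel)"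
    unfolding t_def psi_def set_lebesgue_integral_def A_def[symmetric]
    by (intro Bochner_Integration.integral_cong) (auto simp: hb_def split: split_indicator)
  have lhs: "(\<integral>\<phi>. psi lam4 (K \<phi> \<circ> h) \<partial>M) = (\<integral>x. (\<integral>\<phi>. F x \<phi> \<partial>M) \<partial>lborel)"
    unfolding psiK using P.Fubini_integral[OF Fint] .
  have inner: "(\<integral>\<phi>. F x \<phi> \<partial>M) \<le> indicator A x * (lam4 (hb x) - 4 * (D (hb x))^2)" for x
  proof -
    have "(\<integral>\<phi>. F x \<phi> \<partial>M) = indicator A x * expectation (\<lambda>\<phi>. lam4 (K \<phi> (hb x)))"
      unfolding F_def by simp
    also have "\<dots> \<le> indicator A x * (lam4 (hb x) - 4 * (D (hb x))^2)"
      using gap[OF hbA[of x, unfolded A_def]] by (intro mult_left_mono) auto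
    finally show ?thesis .
  qed
  have Dm: "(\<lambda>x. lam4 (hb x) - 4 * (D (hb x))^2) \<in> borel_measurable borel"
    using D_meas unfolding lam4_def by measurable
  have Db: "\<bar>D \<theta>\<bar> \<le> 1" if "\<theta> \<in> A" for \<theta>
  proof -
    have "\<bar>D \<theta>\<bar> = D \<theta>" using D_pos[of \<theta>] that by (auto simp: A_def)
    also have "D \<theta> \<le> expectation (\<lambda>\<phi>. 1)"
    proof -
      have kb: "\<bar>K \<phi> \<theta> - \<theta>\<bar> \<le> 1" for \<phi> using K0[of \<phi> \<theta>] K1[of \<phi> \<theta>] that by (auto simp: A_def)
      show ?thesis
        unfolding D_def using that kb
        by (intro integral_mono intK[where B=2, of "\<lambda>y. \<bar>y - \<theta>\<bar>"]) (auto simp: A_def)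
    qed
    finally show ?thesis by (simp add: prob_space)
  qed
  have Db2: "\<bar>(D \<theta>)^2\<bar> \<le> 1" if "\<theta> \<in> A" for \<theta>
    using Db[OF that] by (simp add: abs_le_iff power_le_one abs_square_le_1)
  have i1: "integrable lborel (\<lambda>x. indicator A x * (lam4 (hb x) - 4 * (D (hb x))^2))"
    unfolding A_def
  proof (rule intA[where B=5, OF Dm])
    fix x :: real assume "x \<in> {0<..<1}"
    have "\<bar>lam4 (hb x)\<bar> \<le> 1" using lam4_bounds[of "hb x"] hbA[of x] by (auto simp: A_def)
    moreover have "\<bar>(D (hb x))^2\<bar> \<le> 1" using Db2 hbA by blast
    ultimately show "\<bar>lam4 (hb x) - 4 * (D (hb x))^2\<bar> \<le> 5" by linarith
  qed
  have i2: "integrable lborel (\<lambda>x. indicator A x * lam4 (hb x))"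
    unfolding A_def
  proof (rule intA[where B=1])
    show "(\<lambda>x. lam4 (hb x)) \<in> borel_measurable borel" unfolding lam4_def by measurable
    fix x :: real
    show "\<bar>lam4 (hb x)\<bar> \<le> 1" using lam4_bounds[of "hb x"] hbA[of x] by (auto simp: A_def)
  qed
  have i3: "integrable lborel (\<lambda>x. indicator A x * (D (hb x))^2)"
    unfolding A_def
    by (rule intA[where B=1]) (use Db2 hbA D_meas in \<open>auto simp: A_def\<close>)
  define I2 where "I2 = (\<integral>x. indicator A x * (D (hb x))^2 \<partial>lborel)"
  have "(\<integral>x. (\<integral>\<phi>. F x \<phi> \<partial>M) \<partial>lborel) \<le> (\<integral>x. indicator A x * (lam4 (hb x) - 4 * (D (hb x))^2) \<partial>lborel)"
    by (rule integral_mono[OF P.integrable_fst[where f=F, OF Fint] i1 inner])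
  also have "\<dots> = (\<integral>x. indicator A x * lam4 (hb x) - 4 * (indicator A x * (D (hb x))^2) \<partial>lborel)"
    by (simp add: algebra_simps)
  also have "\<dots> = t - 4 * I2"
    using i2 i3 unfolding tdef I2_def by simp
  finally have step1: "(\<integral>\<phi>. psi lam4 (K \<phi> \<circ> h) \<partial>M) \<le> t - 4 * I2" unfolding lhs .
  have "gg t \<le> I2"
  proof (rule gg_le)
    fix s :: real assume s: "s \<in> {0<..1}"
    have I2nn: "0 \<le> I2" unfolding I2_def by simp
    show "cc s * max 0 (t - s) \<le> I2"
    proof (cases "t \<le> s")
      case True then show ?thesis using I2nn by simp
    next
      case False
      define E where "E = {x. s \<le> lam4 (hb x)}"
      have Em: "E \<in> sets borel" unfolding E_def lam4_def by measurable
      have i4: "integrable lborel (\<lambda>x. indicator A x * indicator E x :: real)"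
        unfolding A_def by (rule intA[where B=1 and f="indicator E"]) (use Em in \<open>auto split: split_indicator\<close>)
      have i5: "integrable lborel (\<lambda>x. indicator A x * (s + indicator E x) :: real)"
        unfolding A_def by (rule intA[where B="\<bar>s\<bar> + 1" and f="\<lambda>x. s + indicator E x"]) (use Em in \<open>auto split: split_indicator\<close>)
      have "t \<le> (\<integral>x. indicator A x * (s + indicator E x) \<partial>lborel)"
        unfolding tdef
      proof (rule integral_mono[OF i2 i5])
        fix x
        have "lam4 (hb x) \<le> 1" using lam4_bounds[of "hb x"] hbA[of x] by (auto simp: A_def)
        then show "indicator A x * lam4 (hb x) \<le> indicator A x * (s + indicator E x)"
          using s by (auto simp: E_def split: split_indicator)
      qed
      also have "\<dots> = (\<integral>x. s * indicator A x + indicator A x * indicator E x \<partial>lborel)"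
        by (simp add: algebra_simps)
      also have "\<dots> = s + (\<integral>x. indicator A x * indicator E x \<partial>lborel)"
        using i4 As by (simp add: A_def)
      finally have tJ: "t - s \<le> (\<integral>x. indicator A x * indicator E x \<partial>lborel)" by simp
      have "cc s * max 0 (t - s) = cc s * (t - s)" using False by simp
      also have "\<dots> \<le> cc s * (\<integral>x. indicator A x * indicator E x \<partial>lborel)"
        using tJ cc[of s] s by (intro mult_left_mono) auto
      also have "\<dots> = (\<integral>x. cc s * (indicator A x * indicator E x) \<partial>lborel)" by simp
      also have "\<dots> \<le> I2"
        unfolding I2_def
      proof (rule integral_mono)
        show "integrable lborel (\<lambda>x. cc s * (indicator A x * indicator E x))" using i4 by simp
        show "integrable lborel (\<lambda>x. indicator A x * (D (hb x))^2)" by (rule i3)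
        fix x
        have "x \<in> A \<Longrightarrow> x \<in> E \<Longrightarrow> cc s \<le> (D (hb x))^2"
          using cc(3)[of s "hb x"] s hbA[of x] by (auto simp: E_def A_def)
        then show "cc s * (indicator A x * indicator E x) \<le> indicator A x * (D (hb x))^2"
          by (auto split: split_indicator)
      qed
      finally show ?thesis .
    qed
  qed
  then show ?thesis using step1 unfolding xi_def t_def by simp
qed

end


theorem mainTheorem14:
  fixes PX :: "real measure" and W :: "real \<Rightarrow> real measure"
    and K :: "real \<Rightarrow> real \<Rightarrow> real"
  assumes "input_channel_pair PX W"
    and "finite_mutual_info PX W"
    and "is_cond_cdf PX W K"
    and "condA3 PX W K"
  shows "\<exists>\<xi> lam. contraction \<xi> \<and> admissible_lambda lam \<and>
           (\<forall>h\<in>Fc. (\<integral>\<phi>. psi lam (K \<phi> \<circ> h) \<partial>phi_law PX W) \<le> \<xi> (psi lam h))"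
proof -
  define \<mu> where "\<mu> = phi_law PX W"
  have pA: "prob_space \<mu>" "sets \<mu> = sets borel"
    "\<And>\<theta>. \<theta>\<in>{0<..<1} \<Longrightarrow> measure (theta_phi_law PX W) {z. fst z \<le> \<theta>} = \<theta>"
    using partA[OF assms(1)] unfolding \<mu>_def by auto
  have cc: "\<And>\<phi>. mono (K \<phi>)" "\<And>\<phi> t. continuous (at_right t) (K \<phi>)"
    "\<And>\<phi>. (K \<phi> \<longlongrightarrow> 0) at_bot" "\<And>\<phi>. (K \<phi> \<longlongrightarrow> 1) at_top"
    "\<And>\<theta>. (\<lambda>\<phi>. K \<phi> \<theta>) \<in> borel_measurable borel"
    "\<And>\<theta> B. B \<in> sets borel \<Longrightarrow> measure (theta_phi_law PX W) {z. fst z \<le> \<theta> \<and> snd z \<in> B} = (\<integral>\<phi>\<in>B. K \<phi> \<theta> \<partial>\<mu>)"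
    using assms(3) unfolding is_cond_cdf_def \<mu>_def by auto
  have K0: "0 \<le> K \<phi> t" for \<phi> t
  proof (rule tendsto_upperbound[OF cc(3)[of \<phi>]])
    show "eventually (\<lambda>x. K \<phi> x \<le> K \<phi> t) at_bot"
      using cc(1)[of \<phi>] by (auto simp: eventually_at_bot_linorder mono_def intro: exI[of _ t])
  qed simp
  have K1: "K \<phi> t \<le> 1" for \<phi> t
  proof (rule tendsto_lowerbound[OF cc(4)[of \<phi>]])
    show "eventually (\<lambda>x. K \<phi> t \<le> K \<phi> x) at_top"
      using cc(1)[of \<phi>] by (auto simp: eventually_at_top_linorder mono_def intro: exI[of _ t])
  qed simp
  interpret ccdf \<mu> K
  proof (intro ccdf.intro[OF pA(1)] ccdf_axioms.intro)
    show "sets \<mu> = sets borel" by (rule pA(2))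
    show "\<And>\<phi>. mono (K \<phi>)" by (rule cc(1))
    show "\<And>\<phi> t. continuous (at_right t) (K \<phi>)" by (rule cc(2))
    show "\<And>\<phi> t. 0 \<le> K \<phi> t" by (rule K0)
    show "\<And>\<phi> t. K \<phi> t \<le> 1" by (rule K1)
    show "\<And>\<theta>. (\<lambda>\<phi>. K \<phi> \<theta>) \<in> borel_measurable \<mu>"
      using cc(5) measurable_cong_sets[OF pA(2) refl] by blast
    fix \<theta> :: real assume th: "\<theta> \<in> {0<..<1}"
    have "\<theta> = measure (theta_phi_law PX W) {z. fst z \<le> \<theta> \<and> snd z \<in> UNIV}" using pA(3)[OF th] by simp
    also have "\<dots> = (\<integral>\<phi>\<in>UNIV. K \<phi> \<theta> \<partial>\<mu>)" by (rule cc(6)) simp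
    also have "\<dots> = (\<integral>\<phi>. K \<phi> \<theta> \<partial>\<mu>)" by (simp add: set_lebesgue_integral_def)
    finally show "(\<integral>\<phi>. K \<phi> \<theta> \<partial>\<mu>) = \<theta>" by simp
    show "measure \<mu> {\<phi>. K \<phi> \<theta> = \<theta>} < 1" using assms(4) th unfolding condA3_def \<mu>_def by blast
  qed
  show ?thesis
    using xi_contraction lam4_adm main unfolding \<mu>_def[symmetric] by blast
qed

end
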